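(* Let $m,n\ge0$, $0\le k\le\min(m,n)$, and let $i,j$ be integers with $0\le i\le m$, $0\le j\le n$, $k\le i+j\le m+n-k$. Then $$C_{m,n,k}(i,j)=\frac{\binom{m+n-k}{m-i,\ n-j,\ i+j-k}\;c_{m,n,k}(i,j)}{\binom{m+n-k}{i,\ j,\ m+n-k-i-j}\;D(m,n,k)},\qquad D(m,n,k)=\binom{m+n-k+1}{k}\binom{m+n-2k}{m-k}.$$
   Context: Multinomial coefficients: $\binom{a+b+c}{a,\ b,\ c}=\frac{(a+b+c)!}{a!\,b!\,c!}$. Let $e,f,h$ be the standard basis of $\mathfrak{sl}(2,\mathbb{C})$. $V(n)$ is the irreducible representation of highest weight $n$ with fixed highest weight vector $\phi_n$; $\{f^i\phi_n\}_{0\le i\le n}$ is a basis, $f^{n+1}\phi_n=0$. $\mathfrak{sl}(2)$ acts on $V(m)\otimes V(n)$ by $X(v\otimes w)=Xv\otimes w+v\otimes Xw$. For $0\le k\le\min(m,n)$, $\phi_{m,n,k}=\sum_{l=0}^{k}(-1)^l\binom{m-l}{k-l}\binom{n-k+l}{l} f^l\phi_m\otimes f^{k-l}\phi_n$; it is a highest weight vector of weight $m+n-2k$ generating a copy of $V(m+n-2k)$ with basis $f^a\phi_{m,n,k}$, $0\le a\le m+n-2k$, and $V(m)\otimes V(n)$ is the direct sum of these copies. The coordinates $c_{m,n,k}(i,j)$ are defined by $f^{p-k}\phi_{m,n,k}=\sum_{i+j=p,\,0\le i\le m,\,0\le j\le n} c_{m,n,k}(i,j)\, f^i\phi_m\otimes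 f^j\phi_n$ for $k\le p\le m+n-k$. The Clebsch–Gordan coefficients $C_{m,n,k}(i,j)$ are defined by $f^i\phi_m\otimes f^j\phi_n=\sum_{k} C_{m,n,k}(i,j)\, f^{i+j-k}\phi_{m,n,k}$, sum over $0\le k\le\min(m,n)$ with $k\le i+j\le m+n-k$. *)

theory Defs
  imports Complex_Main
begin

text \<open>Concrete model of V(m) \<otimes> V(n): a vector is a coefficient function
  v :: nat \<Rightarrow> nat \<Rightarrow> complex, where v i j is the coefficient of the basis
  vector f^i phi_m \<otimes> f^j phi_n (only 0 \<le> i \<le> m, 0 \<le> j \<le> n are meaningful).\<close>

type_synonym tvec = "nat \<Rightarrow> nat \<Rightarrow> complex"

text \<open>Action of f on V(m) \<otimes> V(n): f(f^i phi_m \<otimes> f^j phi_n) =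
  f^(i+1) phi_m \<otimes> f^j phi_n + f^i phi_m \<otimes> f^(j+1) phi_n, with f^(m+1) phi_m = 0,
  f^(n+1) phi_n = 0.\<close>
definition f_act :: "nat \<Rightarrow> nat \<Rightarrow> tvec \<Rightarrow> tvec" where
  "f_act m n v = (\<lambda>i j. if i \<le> m \<and> j \<le> n then
      (if 0 < i then v (i - 1) j else 0) + (if 0 < j then v i (j - 1) else 0) else 0)"

definition basis_vec :: "nat \<Rightarrow> nat \<Rightarrow> tvec" where
  "basis_vec i j = (\<lambda>a b. if a = i \<and> b = j then 1 else 0)"

definition phi_mnk :: "nat \<Rightarrow> nat \<Rightarrow> nat \<Rightarrow> tvec" where
  "phi_mnk m n k = (\<lambda>a b. \<Sum>l\<le>k. (-1) ^ l * of_nat ((m - l) choose (k - l))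
       * of_nat ((n - k + l) choose l) * basis_vec l (k - l) a b)"

definition coord_c :: "nat \<Rightarrow> nat \<Rightarrow> nat \<Rightarrow> nat \<Rightarrow> nat \<Rightarrow> complex" where
  "coord_c m n k i j = ((f_act m n ^^ (i + j - k)) (phi_mnk m n k)) i j"

definition adm_k :: "nat \<Rightarrow> nat \<Rightarrow> nat \<Rightarrow> nat set" where
  "adm_k m n p = {k. k \<le> min m n \<and> k \<le> p \<and> p \<le> m + n - k}"

definition CG :: "nat \<Rightarrow> nat \<Rightarrow> nat \<Rightarrow> nat \<Rightarrow> nat \<Rightarrow> complex" where
  "CG m n k i j = (THE C :: nat \<Rightarrow> complex.
      (\<forall>k'. k' \<notin> adm_k m n (i + j) \<longrightarrow> C k' = 0) \<and>
      (\<forall>a b. basis_vec i j a b =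
         (\<Sum>k'\<in>adm_k m n (i + j). C k' * ((f_act m n ^^ (i + j - k')) (phi_mnk m n k')) a b))) k"

definition multinom3 :: "nat \<Rightarrow> nat \<Rightarrow> nat \<Rightarrow> complex" where
  "multinom3 a b c = fact (a + b + c) / (fact a * fact b * fact c)"

definition D_mnk :: "nat \<Rightarrow> nat \<Rightarrow> nat \<Rightarrow> complex" where
  "D_mnk m n k = of_nat ((m + n - k + 1) choose k) * of_nat ((m + n - 2 * k) choose (m - k))"

end

theory Submission
  imports Defs "Jordan_Normal_Form.Determinant"
begin

definition GG :: "nat \<Rightarrow> nat \<Rightarrow> nat \<Rightarrow> nat" where
  "GG a b k = (\<Sum>l\<le>k. ((a + (k - l)) choose a) * ((b + l) choose b))"

lemma GG_0: "GG 0 b k = (b + k + 1) choose k"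
proof -
  have "GG 0 b k = (\<Sum>l\<le>k. (b + l) choose l)"
    unfolding GG_def proof (intro sum.cong refl)
    fix l show "(0 + (k - l) choose 0) * (b + l choose b) = (b + l) choose l"
      using binomial_symmetric[of l "b + l"] by simp
  qed
  also have "\<dots> = Suc (b + k) choose k" by (rule sum_choose_lower)
  finally show ?thesis by simp
qed

lemma GG_k0: "GG a b 0 = 1"
  unfolding GG_def by simp

lemma GG_Suc_Suc: "GG (Suc a) b (Suc k) = GG a b (Suc k) + GG (Suc a) b k"
proof -
  have "GG (Suc a) b (Suc k) = (\<Sum>l\<le>k. ((Suc a + (Suc k - l)) choose Suc a) * ((b + l) choose b))
        + ((b + Suc k) choose b)"
    unfolding GG_def by (simp only: sum.atMost_Suc) simp
  also have "(\<Sum>l\<le>k. ((Suc a + (Suc k - l)) choose Suc a) * ((b + l) choose b))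
     = (\<Sum>l\<le>k. ((a + (Suc k - l)) choose a) * ((b + l) choose b))
       + (\<Sum>l\<le>k. ((Suc a + (k - l)) choose Suc a) * ((b + l) choose b))"
  proof -
    have "\<And>l. l \<le> k \<Longrightarrow> (Suc a + (Suc k - l)) choose Suc a
        = ((a + (Suc k - l)) choose a) + ((Suc a + (k - l)) choose Suc a)"
    proof -
      fix l assume "l \<le> k"
      hence e1: "Suc a + (Suc k - l) = Suc (Suc a + (k - l))" and e2: "a + (Suc k - l) = Suc a + (k - l)"
        by auto
      show "(Suc a + (Suc k - l)) choose Suc a
        = ((a + (Suc k - l)) choose a) + ((Suc a + (k - l)) choose Suc a)"
        unfolding e1 e2 by simp
    qed
    note eq = this
    have "(\<Sum>l\<le>k. ((Suc a + (Suc k - l)) choose Suc a) * ((b + l) choose b))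
       = (\<Sum>l\<le>k. ((a + (Suc k - l)) choose a) * ((b + l) choose b)
           + ((Suc a + (k - l)) choose Suc a) * ((b + l) choose b))"
    proof (intro sum.cong refl)
      fix l assume "l \<in> {..k}" hence "l \<le> k" by simp
      show "((Suc a + (Suc k - l)) choose Suc a) * ((b + l) choose b)
         = ((a + (Suc k - l)) choose a) * ((b + l) choose b) + ((Suc a + (k - l)) choose Suc a) * ((b + l) choose b)"
        by (simp only: eq[OF \<open>l \<le> k\<close>] distrib_right)
    qed
    also have "\<dots> = (\<Sum>l\<le>k. ((a + (Suc k - l)) choose a) * ((b + l) choose b))
       + (\<Sum>l\<le>k. ((Suc a + (k - l)) choose Suc a) * ((b + l) choose b))"
      by (rule sum.distrib)
    finally show ?thesis .
  qed
  also have "(\<Sum>l\<le>k. ((a + (Suc k - l)) choose a) * ((b + l) choose b))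
       + (\<Sum>l\<le>k. ((Suc a + (k - l)) choose Suc a) * ((b + l) choose b)) + ((b + Suc k) choose b)
      = GG a b (Suc k) + GG (Suc a) b k"
  proof -
    have "GG a b (Suc k) = (\<Sum>l\<le>k. ((a + (Suc k - l)) choose a) * ((b + l) choose b)) + ((b + Suc k) choose b)"
      unfolding GG_def by (simp only: sum.atMost_Suc) simp
    moreover have "GG (Suc a) b k = (\<Sum>l\<le>k. ((Suc a + (k - l)) choose Suc a) * ((b + l) choose b))"
      unfolding GG_def ..
    ultimately show ?thesis by simp
  qed
  finally show ?thesis .
qed

lemma GG_closed: "GG a b k = (a + b + k + 1) choose k"
proof (induction a arbitrary: k)
  case 0 then show ?case by (simp add: GG_0)
next
  case (Suc a)
  note IHa = Suc.IH
  show ?case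
  proof (induction k)
    case 0 then show ?case by (simp add: GG_k0)
  next
    case (Suc k)
    have "GG (Suc a) b (Suc k) = GG a b (Suc k) + GG (Suc a) b k" by (rule GG_Suc_Suc)
    also have "\<dots> = ((a + b + Suc k + 1) choose Suc k) + ((Suc a + b + k + 1) choose k)"
      using Suc.IH IHa by simp
    also have "\<dots> = (Suc a + b + Suc k + 1) choose Suc k" by simp
    finally show ?case .
  qed
qed

lemma vdm_main:
  assumes "k \<le> m" "k \<le> n"
  shows "(\<Sum>l\<le>k. ((m - l) choose (k - l)) * ((n - k + l) choose l)) = (m + n - k + 1) choose k"
proof -
  have "(\<Sum>l\<le>k. ((m - l) choose (k - l)) * ((n - k + l) choose l)) = GG (m - k) (n - k) k"
    unfolding GG_def
  proof (intro sum.cong refl)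
    fix l assume "l \<in> {..k}"
    hence l: "l \<le> k" by simp
    have "(m - l) choose (k - l) = (m - k + (k - l)) choose (m - k)"
    proof -
      have e: "m - l = m - k + (k - l)" using l assms by simp
      show ?thesis unfolding e using binomial_symmetric[of "k - l" "m - k + (k - l)"] by simp
    qed
    moreover have "(n - k + l) choose l = (n - k + l) choose (n - k)"
      using binomial_symmetric[of l "n - k + l"] by simp
    ultimately show "((m - l) choose (k - l)) * ((n - k + l) choose l) = (m - k + (k - l) choose (m - k)) * (n - k + l choose (n - k))"
      by simp
  qed
  also have "\<dots> = (m - k + (n - k) + k + 1) choose k" by (rule GG_closed)
  also have "m - k + (n - k) + k + 1 = m + n - k + 1" using assms by simp
  finally show ?thesis .
qed


definition Nw :: "nat \<Rightarrow> nat \<Rightarrow> complex" where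
  "Nw m i = of_nat (fact i * fact i * (m choose i))"

definition e_act :: "nat \<Rightarrow> nat \<Rightarrow> tvec \<Rightarrow> tvec" where
  "e_act m n v = (\<lambda>i j. if i \<le> m \<and> j \<le> n then
     (of_nat i + 1) * (of_nat m - of_nat i) * v (Suc i) j + (of_nat j + 1) * (of_nat n - of_nat j) * v i (Suc j) else 0)"

definition ip :: "nat \<Rightarrow> nat \<Rightarrow> tvec \<Rightarrow> tvec \<Rightarrow> complex" where
  "ip m n v w = (\<Sum>i\<le>m. \<Sum>j\<le>n. Nw m i * Nw n j * v i j * w i j)"

definition homog :: "nat \<Rightarrow> tvec \<Rightarrow> bool" where
  "homog p v \<longleftrightarrow> (\<forall>i j. i + j \<noteq> p \<longrightarrow> v i j = 0)"

definition boxed :: "nat \<Rightarrow> nat \<Rightarrow> tvec \<Rightarrow> bool" where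
  "boxed m n v \<longleftrightarrow> (\<forall>i j. \<not> (i \<le> m \<and> j \<le> n) \<longrightarrow> v i j = 0)"

definition sc :: "complex \<Rightarrow> tvec \<Rightarrow> tvec" where
  "sc c v = (\<lambda>i j. c * v i j)"

lemma f_sc: "f_act m n (sc c v) = sc c (f_act m n v)"
  by (auto simp: f_act_def sc_def fun_eq_iff ring_distribs)

lemma fpow_sc: "(f_act m n ^^ a) (sc c v) = sc c ((f_act m n ^^ a) v)"
  by (induction a) (auto simp: f_sc)

lemma e_sc: "e_act m n (sc c v) = sc c (e_act m n v)"
  by (auto simp: e_act_def sc_def fun_eq_iff ring_distribs)

lemma f_zero: "f_act m n (\<lambda>i j. 0) = (\<lambda>i j. 0)"
  by (auto simp: f_act_def fun_eq_iff)

lemma f_boxed: "boxed m n (f_act m n v)"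
  by (auto simp: f_act_def boxed_def)

lemma fpow_boxed: "boxed m n v \<Longrightarrow> boxed m n ((f_act m n ^^ a) v)"
  by (cases a) (auto simp: f_boxed simp del: funpow.simps simp add: funpow_Suc_right[symmetric] funpow.simps(2))

lemma f_homog: "homog p v \<Longrightarrow> homog (Suc p) (f_act m n v)"
  unfolding homog_def f_act_def by auto

lemma fpow_homog: "homog p v \<Longrightarrow> homog (p + a) ((f_act m n ^^ a) v)"
  by (induction a) (auto simp: f_homog)

lemma e_homog: "homog (Suc p) v \<Longrightarrow> homog p (e_act m n v)"
  unfolding homog_def e_act_def by auto

lemma e_homog0: "homog 0 v \<Longrightarrow> e_act m n v = (\<lambda>i j. 0)"
  unfolding homog_def e_act_def by (auto simp: fun_eq_iff)

lemma ip_sym: "ip m n v w = ip m n w v"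
  unfolding ip_def by (simp add: mult_ac)

lemma ip_sc2: "ip m n v (sc c w) = c * ip m n v w"
  unfolding ip_def sc_def by (simp add: sum_distrib_left mult_ac)

lemma ip_zero2: "ip m n v (\<lambda>i j. 0) = 0"
  unfolding ip_def by simp

lemma commut:
  assumes "boxed m n v" "homog p v"
  shows "e_act m n (f_act m n v) =
    (\<lambda>i j. f_act m n (e_act m n v) i j + (of_nat m + of_nat n - 2 * of_nat p) * v i j)"
proof (rule ext, rule ext)
  fix i j
  show "e_act m n (f_act m n v) i j =
     f_act m n (e_act m n v) i j + (of_nat m + of_nat n - 2 * of_nat p) * v i j"
  proof (cases "i \<le> m \<and> j \<le> n")
    case False
    then show ?thesis using assms(1) by (auto simp: e_act_def f_act_def boxed_def)
  next
    case True
    hence im: "i \<le> m" and jn: "j \<le> n" by auto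
    have h: "(of_nat m + of_nat n - 2 * of_nat p) * v i j = (of_nat m + of_nat n - 2 * of_nat i - 2 * of_nat j) * v i j"
      using assms(2) unfolding homog_def by (cases "i + j = p") auto
    have A: "(of_nat m - of_nat i) * f_act m n v (Suc i) j = (of_nat m - of_nat i) * (v i j + (if 0 < j then v (Suc i) (j - 1) else 0))"
      using im jn by (cases "i = m") (auto simp: f_act_def)
    have B: "(of_nat n - of_nat j) * f_act m n v i (Suc j) = (of_nat n - of_nat j) * ((if 0 < i then v (i - 1) (Suc j) else 0) + v i j)"
      using im jn by (cases "j = n") (auto simp: f_act_def)
    have L: "e_act m n (f_act m n v) i j = (of_nat i + 1) * ((of_nat m - of_nat i) * f_act m n v (Suc i) j)
         + (of_nat j + 1) * ((of_nat n - of_nat j) * f_act m n v i (Suc j))"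
      using im jn by (simp add: e_act_def mult_ac)
    have R: "f_act m n (e_act m n v) i j =
        (if 0 < i then of_nat i * (of_nat m - of_nat (i - 1)) * v i j + (of_nat j + 1) * (of_nat n - of_nat j) * v (i - 1) (Suc j) else 0)
      + (if 0 < j then (of_nat i + 1) * (of_nat m - of_nat i) * v (Suc i) (j - 1) + of_nat j * (of_nat n - of_nat (j - 1)) * v i j else 0)"
      using im jn by (cases i; cases j) (auto simp: f_act_def e_act_def algebra_simps)
    show ?thesis unfolding L A B R h
      using im jn by (cases i; cases j) (auto simp: algebra_simps)
  qed
qed


lemma shift1:
  fixes W c x y :: "nat \<Rightarrow> complex"
  assumes "\<And>i. i < m \<Longrightarrow> W (Suc i) = c i * W i" "c m = 0"
  shows "(\<Sum>i\<le>m. W i * (if 0 < i then x (i - 1) else 0) * y i) = (\<Sum>i\<le>m. W i * x i * (c i * y (Suc i)))"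
proof (cases m)
  case 0 then show ?thesis using assms by simp
next
  case (Suc m')
  have "(\<Sum>i\<le>m. W i * (if 0 < i then x (i - 1) else 0) * y i) = (\<Sum>i\<le>m'. W (Suc i) * x i * y (Suc i))"
    unfolding Suc sum.atMost_Suc_shift by simp
  also have "\<dots> = (\<Sum>i\<le>m'. W i * x i * (c i * y (Suc i)))"
    by (intro sum.cong refl) (use assms(1) Suc in \<open>auto simp: mult_ac\<close>)
  also have "\<dots> = (\<Sum>i\<le>m. W i * x i * (c i * y (Suc i)))"
    unfolding Suc using assms(2) Suc by (simp add: sum.atMost_Suc)
  finally show ?thesis .
qed

lemma Nw_Suc: "i < m \<Longrightarrow> Nw m (Suc i) = ((of_nat i + 1) * (of_nat m - of_nat i)) * Nw m i"
proof -
  assume "i < m"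
  have "Suc i * (m choose Suc i) = (m - i) * (m choose i)"
  proof -
    have "Suc i * (m choose Suc i) = m * ((m - 1) choose i)"
      using Suc_times_binomial[of i "m - 1"] \<open>i < m\<close> by simp
    also have "\<dots> = (m - i) * (m choose i)"
      by (metis binomial_absorb_comp diff_Suc_1 less_imp_Suc_add \<open>i < m\<close>
          Suc_times_binomial_eq times_binomial_minus1_eq)
    finally show ?thesis .
  qed
  note eq = this
  have "fact (Suc i) * fact (Suc i) * (m choose Suc i) = Suc i * fact i * fact i * (Suc i * (m choose Suc i))"
    by (simp add: algebra_simps)
  also have "\<dots> = Suc i * fact i * fact i * ((m - i) * (m choose i))" by (simp only: eq)
  also have "\<dots> = (Suc i * (m - i)) * (fact i * fact i * (m choose i))" by (simp only: mult_ac)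
  finally have "fact (Suc i) * fact (Suc i) * (m choose Suc i) = (Suc i * (m - i)) * (fact i * fact i * (m choose i))" .
  hence H: "Nw m (Suc i) = of_nat (Suc i * (m - i)) * Nw m i"
    unfolding Nw_def by (metis of_nat_mult)
  have c: "complex_of_nat (Suc i * (m - i)) = (of_nat i + 1) * (of_nat m - of_nat i)"
    using \<open>i < m\<close> by (simp only: of_nat_mult of_nat_Suc of_nat_diff[OF less_imp_le[OF \<open>i < m\<close>]]) (simp add: algebra_simps)
  show ?thesis by (subst c[symmetric]) (rule H)
qed

lemma adjoint: "ip m n (f_act m n v) w = ip m n v (e_act m n w)"
proof -
  let ?ci = "\<lambda>i. (of_nat i + 1) * (of_nat m - of_nat i) :: complex"
  let ?cj = "\<lambda>j. (of_nat j + 1) * (of_nat n - of_nat j) :: complex"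
  have "ip m n (f_act m n v) w =
     (\<Sum>j\<le>n. Nw n j * (\<Sum>i\<le>m. Nw m i * (if 0 < i then v (i - 1) j else 0) * w i j))
   + (\<Sum>i\<le>m. Nw m i * (\<Sum>j\<le>n. Nw n j * (if 0 < j then v i (j - 1) else 0) * w i j))"
    unfolding ip_def f_act_def
    by (simp add: sum.swap[of _ "{..m}"] sum_distrib_left sum.distrib[symmetric] algebra_simps)
  also have "\<dots> = (\<Sum>j\<le>n. Nw n j * (\<Sum>i\<le>m. Nw m i * v i j * (?ci i * w (Suc i) j)))
   + (\<Sum>i\<le>m. Nw m i * (\<Sum>j\<le>n. Nw n j * v i j * (?cj j * w i (Suc j))))"
    by (subst shift1[where c = ?ci], simp add: Nw_Suc, simp,
        subst shift1[where c = ?cj], simp add: Nw_Suc, simp, rule refl)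
  also have "\<dots> = ip m n v (e_act m n w)"
    unfolding ip_def e_act_def
    by (simp add: sum.swap[of _ "{..m}"] sum_distrib_left sum.distrib[symmetric] algebra_simps)
  finally show ?thesis .
qed


lemma e_fpow:
  assumes "boxed m n v" "homog d v" "e_act m n v = (\<lambda>i j. 0)"
  shows "e_act m n ((f_act m n ^^ Suc a) v) =
    sc (of_nat (Suc a) * (of_nat m + of_nat n - 2 * of_nat d - of_nat a)) ((f_act m n ^^ a) v)"
proof (induction a)
  case 0
  show ?case using commut[OF assms(1,2)] assms(3) by (simp add: f_zero sc_def)
next
  case (Suc a)
  have bx: "boxed m n ((f_act m n ^^ Suc a) v)" by (rule fpow_boxed[OF assms(1)])
  have hg: "homog (d + Suc a) ((f_act m n ^^ Suc a) v)" by (rule fpow_homog[OF assms(2)])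
  have "e_act m n ((f_act m n ^^ Suc (Suc a)) v) = e_act m n (f_act m n ((f_act m n ^^ Suc a) v))" by simp
  also have "\<dots> = (\<lambda>i j. f_act m n (e_act m n ((f_act m n ^^ Suc a) v)) i j
       + (of_nat m + of_nat n - 2 * of_nat (d + Suc a)) * (f_act m n ^^ Suc a) v i j)"
    by (rule commut[OF bx hg])
  also have "\<dots> = sc (of_nat (Suc (Suc a)) * (of_nat m + of_nat n - 2 * of_nat d - of_nat (Suc a))) ((f_act m n ^^ Suc a) v)"
    unfolding Suc f_sc by (simp add: sc_def fun_eq_iff algebra_simps)
  finally show ?case .
qed

lemma norm_fpow:
  assumes "boxed m n v" "homog d v" "e_act m n v = (\<lambda>i j. 0)"
  shows "ip m n ((f_act m n ^^ a) v) ((f_act m n ^^ a) v) =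
    (\<Prod>s<a. of_nat (Suc s) * (of_nat m + of_nat n - 2 * of_nat d - of_nat s)) * ip m n v v"
proof (induction a)
  case 0 then show ?case by simp
next
  case (Suc a)
  have "ip m n ((f_act m n ^^ Suc a) v) ((f_act m n ^^ Suc a) v)
      = ip m n ((f_act m n ^^ a) v) (e_act m n ((f_act m n ^^ Suc a) v))"
    by (simp add: adjoint)
  also have "\<dots> = (of_nat (Suc a) * (of_nat m + of_nat n - 2 * of_nat d - of_nat a)) *
       ip m n ((f_act m n ^^ a) v) ((f_act m n ^^ a) v)"
    by (simp only: e_fpow[OF assms] ip_sc2)
  finally show ?case using Suc.IH by (simp add: mult_ac)
qed

lemma ortho_fpow:
  assumes "boxed m n w" "homog d w" "e_act m n w = (\<lambda>i j. 0)"
  shows "b < a \<Longrightarrow> ip m n ((f_act m n ^^ a) v) ((f_act m n ^^ b) w) = 0"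
proof (induction b arbitrary: a)
  case 0
  then obtain a' where a: "a = Suc a'" by (cases a) auto
  show ?case unfolding a by (simp add: adjoint assms(3) ip_zero2)
next
  case (Suc b)
  then obtain a' where a: "a = Suc a'" and "b < a'" by (cases a) auto
  have "ip m n ((f_act m n ^^ a) v) ((f_act m n ^^ Suc b) w)
     = ip m n ((f_act m n ^^ a') v) (e_act m n ((f_act m n ^^ Suc b) w))"
    unfolding a by (simp add: adjoint)
  also have "\<dots> = 0"
    by (simp only: e_fpow[OF assms] ip_sc2 Suc.IH[OF \<open>b < a'\<close>] mult_zero_right)
  finally show ?case .
qed

definition cphi :: "nat \<Rightarrow> nat \<Rightarrow> nat \<Rightarrow> nat \<Rightarrow> complex" where
  "cphi m n k l = (-1) ^ l * of_nat ((m - l) choose (k - l)) * of_nat ((n - k + l) choose l)"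

lemma phi_val: "phi_mnk m n k a b = (if a \<le> k \<and> b = k - a then cphi m n k a else 0)"
proof -
  have "phi_mnk m n k a b = (\<Sum>l\<le>k. if l = a then (if b = k - a then cphi m n k l else 0) else 0)"
    unfolding phi_mnk_def basis_vec_def cphi_def by (intro sum.cong refl) auto
  also have "\<dots> = (if a \<le> k \<and> b = k - a then cphi m n k a else 0)"
    by (simp add: sum.delta)
  finally show ?thesis .
qed

lemma phi_boxed: "k \<le> m \<Longrightarrow> k \<le> n \<Longrightarrow> boxed m n (phi_mnk m n k)"
  unfolding boxed_def phi_val by auto

lemma phi_homog: "homog k (phi_mnk m n k)"
  unfolding homog_def phi_val by auto

lemma phi_e:
  assumes "k \<le> m" "k \<le> n"
  shows "e_act m n (phi_mnk m n k) = (\<lambda>i j. 0)"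
proof (rule ext, rule ext)
  fix i j
  show "e_act m n (phi_mnk m n k) i j = 0"
  proof (cases "i \<le> m \<and> j \<le> n \<and> Suc (i + j) = k")
    case False
    then show ?thesis unfolding e_act_def phi_val by auto
  next
    case True
    hence im: "i \<le> m" and jn: "j \<le> n" and jk: "j = k - Suc i" and ik: "i < k" by auto
    have 1: "(m - i) * ((m - Suc i) choose (k - Suc i)) = (k - i) * ((m - i) choose (k - i))"
    proof -
      have "Suc (m - Suc i) * ((m - Suc i) choose (k - Suc i)) = (Suc (m - Suc i) choose Suc (k - Suc i)) * Suc (k - Suc i)"
        by (rule Suc_times_binomial_eq)
      moreover have "Suc (m - Suc i) = m - i" "Suc (k - Suc i) = k - i" using ik assms by auto
      ultimately show ?thesis by simp
    qed
    have 2: "Suc i * ((n - k + Suc i) choose Suc i) = (n - k + Suc i) * ((n - k + i) choose i)"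
      using Suc_times_binomial[of i "n - k + i"] by simp
    define X where "X = (m - Suc i) choose (k - Suc i)"
    define Y where "Y = (n - k + Suc i) choose Suc i"
    define B1 where "B1 = (m - i) choose (k - i)"
    define B2 where "B2 = (n - k + i) choose i"
    have c1: "(of_nat i + 1) * (of_nat m - of_nat i) * of_nat X * of_nat Y
        = (of_nat ((k - i) * B1 * ((n - k + Suc i) * B2)) :: complex)"
    proof -
      have "(of_nat i + 1) * (of_nat m - of_nat i) * of_nat X * of_nat Y
          = (of_nat (((m - i) * X) * (Suc i * Y)) :: complex)"
        by (simp only: of_nat_mult of_nat_Suc of_nat_diff[OF im]) (simp add: algebra_simps)
      thus ?thesis unfolding X_def Y_def B1_def B2_def 1 2 by (simp add: mult_ac)
    qed
    have c2: "(of_nat j + 1) * (of_nat n - of_nat j) = (of_nat ((k - i) * (n - k + Suc i)) :: complex)"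
    proof -
      have a1: "Suc j = k - i" using jk ik by simp
      have a2: "n = j + (n - k + Suc i)" using jk ik assms by simp
      have "(of_nat j + 1 :: complex) = of_nat (k - i)" unfolding a1[symmetric] by simp
      moreover have "(of_nat n - of_nat j :: complex) = of_nat (n - k + Suc i)"
        by (subst a2) (simp only: of_nat_add, simp)
      ultimately show ?thesis by (simp only: of_nat_mult)
    qed
    have cS: "cphi m n k (Suc i) = - ((-1)^i * of_nat X * of_nat Y)"
      unfolding cphi_def X_def Y_def by simp
    have cI: "cphi m n k i = (-1)^i * of_nat B1 * of_nat B2"
      unfolding cphi_def B1_def B2_def by simp
    have "e_act m n (phi_mnk m n k) i j =
       (of_nat i + 1) * (of_nat m - of_nat i) * cphi m n k (Suc i) + (of_nat j + 1) * (of_nat n - of_nat j) * cphi m n k i"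
      unfolding e_act_def phi_val using im jn jk ik by auto
    also have "\<dots> = (-1)^i * ((of_nat j + 1) * (of_nat n - of_nat j) * of_nat B1 * of_nat B2
        - (of_nat i + 1) * (of_nat m - of_nat i) * of_nat X * of_nat Y)"
      unfolding cS cI by (simp add: algebra_simps)
    also have "\<dots> = (-1)^i * (of_nat ((k - i) * (n - k + Suc i)) * of_nat B1 * of_nat B2
        - of_nat ((k - i) * B1 * ((n - k + Suc i) * B2)))"
      by (simp only: c1 c2)
    also have "\<dots> = 0" by (simp only: of_nat_mult) (simp only: mult_ac diff_self mult_zero_right mult_zero_left)
    finally show ?thesis .
  qed
qed


definition Sset :: "nat \<Rightarrow> nat \<Rightarrow> nat \<Rightarrow> nat set" where
  "Sset m n p = {i. i \<le> m \<and> i \<le> p \<and> p - i \<le> n}"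

lemma ip_homog:
  assumes "homog p v"
  shows "ip m n v w = (\<Sum>i\<in>Sset m n p. Nw m i * Nw n (p - i) * v i (p - i) * w i (p - i))"
proof -
  have "ip m n v w = (\<Sum>i\<le>m. if i \<le> p \<and> p - i \<le> n then Nw m i * Nw n (p - i) * v i (p - i) * w i (p - i) else 0)"
    unfolding ip_def
  proof (intro sum.cong refl)
    fix i assume "i \<in> {..m}"
    have "(\<Sum>j\<le>n. Nw m i * Nw n j * v i j * w i j)
        = (\<Sum>j\<le>n. if j = p - i then (if i \<le> p then Nw m i * Nw n j * v i j * w i j else 0) else 0)"
      using assms unfolding homog_def by (intro sum.cong refl) auto
    also have "\<dots> = (if i \<le> p \<and> p - i \<le> n then Nw m i * Nw n (p - i) * v i (p - i) * w i (p - i) else 0)"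
      by (simp add: sum.delta)
    finally show "(\<Sum>j\<le>n. Nw m i * Nw n j * v i j * w i j) = \<dots>" .
  qed
  also have "\<dots> = (\<Sum>i\<in>{i\<in>{..m}. i \<le> p \<and> p - i \<le> n}. Nw m i * Nw n (p - i) * v i (p - i) * w i (p - i))"
    by (subst sum.inter_filter) auto
  also have "{i\<in>{..m}. i \<le> p \<and> p - i \<le> n} = Sset m n p" unfolding Sset_def by auto
  finally show ?thesis .
qed

lemma finite_Sset: "finite (Sset m n p)"
  unfolding Sset_def by (rule finite_subset[of _ "{..m}"]) auto

lemma card_Sset_adm:
  assumes "p \<le> m + n"
  shows "card (Sset m n p) = card (adm_k m n p)"
proof -
  have 1: "Sset m n p = {p - min p n .. min m p}" unfolding Sset_def by auto
  have 2: "adm_k m n p = {.. min (min m n) (min p (m + n - p))}" unfolding adm_k_def using assms by auto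
  show ?thesis unfolding 1 2 card_atLeastAtMost card_atMost using assms by (simp add: min_def; arith)
qed

lemma finite_adm: "finite (adm_k m n p)"
  unfolding adm_k_def by (rule finite_subset[of _ "{..m}"]) auto


lemma term_nat:
  assumes "l \<le> k" "k \<le> m" "k \<le> n"
  shows "(fact l * fact l * (m choose l)) * (fact (k - l) * fact (k - l) * (n choose (k - l)))
       * (((m - l) choose (k - l)) * ((m - l) choose (k - l))) * (((n - k + l) choose l) * ((n - k + l) choose l))
       * (fact (m - k) * fact (n - k))
     = fact m * fact n * (((m - l) choose (k - l)) * ((n - k + l) choose l))"
proof -
  have a0: "fact (k - l) * fact (m - k) * ((m - l) choose (k - l)) = fact (m - l)"
    using binomial_fact_lemma[of "k - l" "m - l"] assms by simp
  have "fact l * (m choose l) * (((m - l) choose (k - l)) * fact (k - l) * fact (m - k)) = fact l * (m choose l) * fact (m - l)"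
    by (simp only: a0[symmetric] mult_ac)
  also have "\<dots> = fact m" using binomial_fact_lemma[of l m] assms by (simp add: mult_ac)
  finally have a: "fact l * (m choose l) * (((m - l) choose (k - l)) * fact (k - l) * fact (m - k)) = (fact m :: nat)" .
  have b0: "fact l * fact (n - k) * ((n - k + l) choose l) = fact (n - k + l)"
    using binomial_fact_lemma[of l "n - k + l"] by simp
  have b1: "n - (k - l) = n - k + l" using assms by simp
  have "fact (k - l) * (n choose (k - l)) * (((n - k + l) choose l) * fact l * fact (n - k)) = fact (k - l) * (n choose (k - l)) * fact (n - (k - l))"
    by (simp only: b1 b0[symmetric] mult_ac)
  also have "\<dots> = fact n" using binomial_fact_lemma[of "k - l" n] assms by (simp add: mult_ac)
  finally have b: "fact (k - l) * (n choose (k - l)) * (((n - k + l) choose l) * fact l * fact (n - k)) = (fact n :: nat)" .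
  have "(fact l * fact l * (m choose l)) * (fact (k - l) * fact (k - l) * (n choose (k - l)))
       * (((m - l) choose (k - l)) * ((m - l) choose (k - l))) * (((n - k + l) choose l) * ((n - k + l) choose l))
       * (fact (m - k) * fact (n - k))
     = (fact l * (m choose l) * (((m - l) choose (k - l)) * fact (k - l) * fact (m - k)))
       * (fact (k - l) * (n choose (k - l)) * (((n - k + l) choose l) * fact l * fact (n - k)))
       * (((m - l) choose (k - l)) * ((n - k + l) choose l))"
    by (simp only: mult_ac)
  also have "\<dots> = fact m * fact n * (((m - l) choose (k - l)) * ((n - k + l) choose l))"
    unfolding a b ..
  finally show ?thesis .
qed

lemma gval:
  assumes "k \<le> m" "k \<le> n"
  shows "ip m n (phi_mnk m n k) (phi_mnk m n k)
     = of_nat (fact m * fact n * ((m + n - k + 1) choose k)) / of_nat (fact (m - k) * fact (n - k))"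
proof -
  have S: "Sset m n k = {..k}" unfolding Sset_def using assms by auto
  have "ip m n (phi_mnk m n k) (phi_mnk m n k)
      = (\<Sum>l\<le>k. Nw m l * Nw n (k - l) * cphi m n k l * cphi m n k l)"
    unfolding ip_homog[OF phi_homog] S by (intro sum.cong refl) (simp add: phi_val)
  also have "\<dots> = (\<Sum>l\<le>k. of_nat (fact m * fact n * (((m - l) choose (k - l)) * ((n - k + l) choose l)))
        / of_nat (fact (m - k) * fact (n - k)))"
  proof (intro sum.cong refl)
    fix l assume "l \<in> {..k}" hence l: "l \<le> k" by simp
    have sq: "cphi m n k l * cphi m n k l = of_nat (((m - l) choose (k - l)) * ((m - l) choose (k - l))) * of_nat (((n - k + l) choose l) * ((n - k + l) choose l))"
      unfolding cphi_def by (simp add: algebra_simps power_mult_distrib[symmetric])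
    have "Nw m l * Nw n (k - l) * cphi m n k l * cphi m n k l * of_nat (fact (m - k) * fact (n - k))
        = of_nat ((fact l * fact l * (m choose l)) * (fact (k - l) * fact (k - l) * (n choose (k - l)))
       * (((m - l) choose (k - l)) * ((m - l) choose (k - l))) * (((n - k + l) choose l) * ((n - k + l) choose l))
       * (fact (m - k) * fact (n - k)))"
    proof -
      have "Nw m l * Nw n (k - l) * cphi m n k l * cphi m n k l * of_nat (fact (m - k) * fact (n - k))
         = Nw m l * Nw n (k - l) * (cphi m n k l * cphi m n k l) * of_nat (fact (m - k) * fact (n - k))"
        by (simp only: mult.assoc)
      thus ?thesis unfolding sq Nw_def by (simp only: of_nat_mult mult_ac)
    qed
    also have "\<dots> = of_nat (fact m * fact n * (((m - l) choose (k - l)) * ((n - k + l) choose l)))"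
      by (simp only: term_nat[OF l assms])
    finally show "Nw m l * Nw n (k - l) * cphi m n k l * cphi m n k l = of_nat (fact m * fact n * (((m - l) choose (k - l)) * ((n - k + l) choose l)))
        / of_nat (fact (m - k) * fact (n - k))"
      by (rule eq_divide_imp[rotated]) simp
  qed
  also have "\<dots> = of_nat (fact m * fact n * (\<Sum>l\<le>k. ((m - l) choose (k - l)) * ((n - k + l) choose l)))
        / of_nat (fact (m - k) * fact (n - k))"
    by (simp only: sum_divide_distrib[symmetric] of_nat_sum[symmetric] sum_distrib_left)
  also have "\<dots> = of_nat (fact m * fact n * ((m + n - k + 1) choose k)) / of_nat (fact (m - k) * fact (n - k))"
    by (simp only: vdm_main[OF assms])
  finally show ?thesis .
qed

lemma aux_field: "(B::complex) \<noteq> 0 \<Longrightarrow> A / (B * C) * (D * B) = (D * A) / C"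
  by (cases "C = 0") (simp_all add: field_simps)

lemma prodval:
  "a \<le> M \<Longrightarrow> (\<Prod>s<a. of_nat (Suc s) * (of_nat M - of_nat s)) = (of_nat (fact a * fact M) / of_nat (fact (M - a)) :: complex)"
proof (induction a)
  case 0 then show ?case by simp
next
  case (Suc a)
  hence aM: "a < M" by simp
  have f: "fact (M - a) = (M - a) * fact (M - Suc a)"
  proof -
    have e: "M - a = Suc (M - Suc a)" using aM by simp
    show ?thesis unfolding e by simp
  qed
  have "(\<Prod>s<Suc a. of_nat (Suc s) * (of_nat M - of_nat s)) =
     of_nat (fact a * fact M) / of_nat (fact (M - a)) * (of_nat (Suc a) * (of_nat M - of_nat a) :: complex)"
    using Suc by simp
  also have "\<dots> = of_nat (fact a * fact M) / (of_nat (M - a) * of_nat (fact (M - Suc a))) * (of_nat (Suc a) * of_nat (M - a))"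
    unfolding f using aM by (simp add: of_nat_diff)
  also have "\<dots> = (of_nat (Suc a) * of_nat (fact a * fact M)) / of_nat (fact (M - Suc a))"
    by (rule aux_field) (use aM in simp)
  also have "\<dots> = of_nat (fact (Suc a) * fact M) / of_nat (fact (M - Suc a))"
    by (simp only: of_nat_mult[symmetric] fact_Suc mult.assoc of_nat_id)
  finally show ?case .
qed


lemma left_right_inv_fun:
  fixes a b :: "nat \<Rightarrow> nat \<Rightarrow> 'a::field"
  assumes "\<And>k k'. k < d \<Longrightarrow> k' < d \<Longrightarrow> (\<Sum>t<d. a k t * b t k') = (if k = k' then 1 else 0)"
    and "t < d" "t' < d"
  shows "(\<Sum>k<d. b t k * a k t') = (if t = t' then 1 else 0)"
proof -
  define A where "A = mat d d (\<lambda>(k,t). a k t)"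
  define B where "B = mat d d (\<lambda>(t,k). b t k)"
  have AB: "A * B = 1\<^sub>m d"
    by (rule eq_matI) (auto simp: A_def B_def scalar_prod_def assms(1) atLeast0LessThan)
  have "B * A = 1\<^sub>m d"
    by (rule mat_mult_left_right_inverse[OF _ _ AB]) (auto simp: A_def B_def)
  hence "(B * A) $$ (t,t') = 1\<^sub>m d $$ (t,t')" by simp
  thus ?thesis using assms(2,3) by (simp add: A_def B_def scalar_prod_def atLeast0LessThan)
qed

lemma left_right_inv_set:
  fixes a b :: "nat \<Rightarrow> nat \<Rightarrow> 'a::field"
  assumes fI: "finite I" and fK: "finite K" and c: "card I = card K"
    and h: "\<And>k k'. k \<in> K \<Longrightarrow> k' \<in> K \<Longrightarrow> (\<Sum>t\<in>I. a k t * b t k') = (if k = k' then 1 else 0)"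
    and t: "t \<in> I" "t' \<in> I"
  shows "(\<Sum>k\<in>K. b t k * a k t') = (if t = t' then 1 else 0)"
proof -
  define d where "d = card I"
  obtain hI where hI: "bij_betw hI {0..<d} I" using ex_bij_betw_nat_finite[OF fI] d_def by auto
  obtain hK where hK: "bij_betw hK {0..<d} K" using ex_bij_betw_nat_finite[OF fK] d_def c by auto
  have sI: "\<And>g. (\<Sum>x<d. g (hI x)) = sum g I"
    using sum.reindex_bij_betw[OF hI] by (simp add: atLeast0LessThan)
  have sK: "\<And>g. (\<Sum>x<d. g (hK x)) = sum g K"
    using sum.reindex_bij_betw[OF hK] by (simp add: atLeast0LessThan)
  have injK: "\<And>x y. x < d \<Longrightarrow> y < d \<Longrightarrow> hK x = hK y \<longleftrightarrow> x = y"
    using hK unfolding bij_betw_def inj_on_def by auto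
  have injI: "\<And>x y. x < d \<Longrightarrow> y < d \<Longrightarrow> hI x = hI y \<longleftrightarrow> x = y"
    using hI unfolding bij_betw_def inj_on_def by auto
  have inK: "\<And>x. x < d \<Longrightarrow> hK x \<in> K" using hK unfolding bij_betw_def by auto
  have H: "(\<Sum>x<d. a (hK k) (hI x) * b (hI x) (hK k')) = (if k = k' then 1 else 0)"
    if "k < d" "k' < d" for k k'
    using sI[of "\<lambda>x. a (hK k) x * b x (hK k')"] h[OF inK[OF that(1)] inK[OF that(2)]] injK[OF that] by simp
  obtain s where s: "s < d" "hI s = t" using t(1) hI unfolding bij_betw_def by auto
  obtain s' where s': "s' < d" "hI s' = t'" using t(2) hI unfolding bij_betw_def by auto
  have "(\<Sum>k\<in>K. b t k * a k t') = (\<Sum>x<d. b (hI s) (hK x) * a (hK x) (hI s'))"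
    using sK[of "\<lambda>k. b t k * a k t'"] s s' by simp
  also have "\<dots> = (if s = s' then 1 else 0)"
    by (rule left_right_inv_fun[where a = "\<lambda>k x. a (hK k) (hI x)" and b = "\<lambda>x k. b (hI x) (hK k)", OF H s(1) s'(1)])
  also have "\<dots> = (if t = t' then 1 else 0)" using injI[OF s(1) s'(1)] s s' by simp
  finally show ?thesis .
qed


lemma ip_sum1:
  assumes "finite K"
  shows "ip m n (\<lambda>a b. \<Sum>k\<in>K. C k * V k a b) w = (\<Sum>k\<in>K. C k * ip m n (V k) w)"
proof -
  have "ip m n (\<lambda>a b. \<Sum>k\<in>K. C k * V k a b) w = (\<Sum>i\<le>m. \<Sum>j\<le>n. \<Sum>k\<in>K. C k * (Nw m i * Nw n j * V k i j * w i j))"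
    unfolding ip_def by (simp add: sum_distrib_left sum_distrib_right mult_ac)
  also have "\<dots> = (\<Sum>k\<in>K. \<Sum>i\<le>m. \<Sum>j\<le>n. C k * (Nw m i * Nw n j * V k i j * w i j))"
    by (simp add: sum.swap[of _ K])
  also have "\<dots> = (\<Sum>k\<in>K. C k * ip m n (V k) w)"
    unfolding ip_def by (simp add: sum_distrib_left)
  finally show ?thesis .
qed

lemma ip_basis:
  assumes "i \<le> m" "j \<le> n"
  shows "ip m n (basis_vec i j) w = Nw m i * Nw n j * w i j"
proof -
  have "ip m n (basis_vec i j) w = (\<Sum>a\<le>m. \<Sum>b\<le>n. if a = i then (if b = j then Nw m i * Nw n j * w i j else 0) else 0)"
    unfolding ip_def basis_vec_def by (rule sum.cong[OF refl], rule sum.cong[OF refl]) auto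
  also have "\<dots> = (\<Sum>a\<le>m. if a = i then Nw m i * Nw n j * w i j else 0)"
  proof (intro sum.cong refl)
    fix a show "(\<Sum>b\<le>n. if a = i then (if b = j then Nw m i * Nw n j * w i j else 0) else 0)
      = (if a = i then Nw m i * Nw n j * w i j else 0)"
      using assms by (cases "a = i") (simp_all add: sum.delta')
  qed
  also have "\<dots> = Nw m i * Nw n j * w i j" using assms by (simp add: sum.delta')
  finally show ?thesis .
qed

lemma final_alg:
  fixes fi fj fm fn fmi fnj fT fq fM fmk fnk fa Bc c :: complex
  assumes "fi \<noteq> 0" "fj \<noteq> 0" "fm \<noteq> 0" "fn \<noteq> 0" "fmi \<noteq> 0" "fnj \<noteq> 0" "fT \<noteq> 0" "fq \<noteq> 0"
    "fM \<noteq> 0" "fmk \<noteq> 0" "fnk \<noteq> 0" "fa \<noteq> 0" "Bc \<noteq> 0"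
  shows "(fi * fi * (fm / (fi * fmi))) * (fj * fj * (fn / (fj * fnj))) * c
          / ((fa * fM / fq) * (fm * fn * Bc / (fmk * fnk)))
       = (fT / (fmi * fnj * fa)) * c / ((fT / (fi * fj * fq)) * (Bc * (fM / (fmk * fnk))))"
  using assms by (simp add: field_simps)


theorem corollary8p5:
  fixes m n k i j :: nat
  assumes "k \<le> min m n" and "i \<le> m" and "j \<le> n"
    and "k \<le> i + j" and "i + j \<le> m + n - k"
  shows "CG m n k i j =
    multinom3 (m - i) (n - j) (i + j - k) * coord_c m n k i j
      / (multinom3 i j (m + n - k - i - j) * D_mnk m n k)"
proof -
  define p where "p = i + j"
  define K where "K = adm_k m n p"
  define I where "I = Sset m n p"
  define v where "v = (\<lambda>k. (f_act m n ^^ (p - k)) (phi_mnk m n k))"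
  define G where "G = (\<lambda>k. ip m n (v k) (v k))"
  have kK: "k \<in> K" using assms unfolding K_def adm_k_def p_def by auto
  have Kp: "k' \<le> m \<and> k' \<le> n \<and> k' \<le> p \<and> p \<le> m + n - k'" if "k' \<in> K" for k'
    using that unfolding K_def adm_k_def by auto
  have vhom: "homog p (v k')" if "k' \<in> K" for k'
  proof -
    have "homog (k' + (p - k')) (v k')" unfolding v_def by (rule fpow_homog[OF phi_homog])
    moreover have "k' + (p - k') = p" using Kp[OF that] by simp
    ultimately show ?thesis by simp
  qed
  have vbox: "boxed m n (v k')" if "k' \<in> K" for k'
    unfolding v_def using Kp[OF that] by (intro fpow_boxed phi_boxed) auto
  have Gval: "G k' = of_nat (fact (p - k') * fact (m + n - 2 * k')) / of_nat (fact (m + n - 2 * k' - (p - k')))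
      * (of_nat (fact m * fact n * ((m + n - k' + 1) choose k')) / of_nat (fact (m - k') * fact (n - k')))"
    if "k' \<in> K" for k'
  proof -
    have h: "k' \<le> m" "k' \<le> n" "k' \<le> p" "p \<le> m + n - k'" using Kp[OF that] by auto
    have L: "(of_nat m + of_nat n - 2 * of_nat k' :: complex) = of_nat (m + n - 2 * k')"
      using h by (simp add: of_nat_diff)
    have "G k' = (\<Prod>s<p - k'. of_nat (Suc s) * (of_nat m + of_nat n - 2 * of_nat k' - of_nat s)) * ip m n (phi_mnk m n k') (phi_mnk m n k')"
      unfolding G_def v_def by (rule norm_fpow[OF phi_boxed[OF h(1,2)] phi_homog phi_e[OF h(1,2)]])
    also have "\<dots> = (\<Prod>s<p - k'. of_nat (Suc s) * (of_nat (m + n - 2 * k') - of_nat s)) * ip m n (phi_mnk m n k') (phi_mnk m n k')"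
      by (simp only: L)
    also have "\<dots> = of_nat (fact (p - k') * fact (m + n - 2 * k')) / of_nat (fact (m + n - 2 * k' - (p - k')))
      * (of_nat (fact m * fact n * ((m + n - k' + 1) choose k')) / of_nat (fact (m - k') * fact (n - k')))"
    proof -
      have pv: "(\<Prod>s<p - k'. of_nat (Suc s) * (of_nat (m + n - 2 * k') - of_nat s)) =
         (of_nat (fact (p - k') * fact (m + n - 2 * k')) / of_nat (fact (m + n - 2 * k' - (p - k'))) :: complex)"
        by (rule prodval) (use h in arith)
      show ?thesis by (simp only: pv gval[OF h(1,2)])
    qed
    finally show ?thesis .
  qed
  have Gnz: "G k' \<noteq> 0" if "k' \<in> K" for k'
  proof -
    have "(m + n - k' + 1) choose k' \<noteq> 0" using Kp[OF that] by (simp add: binomial_eq_0_iff)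
    thus ?thesis unfolding Gval[OF that] by (simp del: of_nat_fact)
  qed
  have orth0: "ip m n (v k1) (v k2) = 0" if "k1 \<in> K" "k2 \<in> K" "k1 < k2" for k1 k2
  proof -
    have h: "k2 \<le> m" "k2 \<le> n" "k2 \<le> p" using Kp[OF that(2)] by auto
    show ?thesis unfolding v_def
      by (rule ortho_fpow[OF phi_boxed[OF h(1,2)] phi_homog phi_e[OF h(1,2)]]) (use that h in arith)
  qed
  have ipv: "ip m n (v k1) (v k2) = (if k1 = k2 then G k1 else 0)" if "k1 \<in> K" "k2 \<in> K" for k1 k2
  proof (cases "k1 = k2")
    case True then show ?thesis unfolding G_def by simp
  next
    case False
    then consider "k1 < k2" | "k2 < k1" by arith
    then show ?thesis using orth0 that False ip_sym by metis
  qed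
  define B where "B = (\<lambda>t k'. Nw m t * Nw n (p - t) * v k' t (p - t) / G k')"
  define A where "A = (\<lambda>k' t. v k' t (p - t))"
  have hyp: "(\<Sum>t\<in>I. A k1 t * B t k2) = (if k1 = k2 then 1 else 0)" if "k1 \<in> K" "k2 \<in> K" for k1 k2
  proof -
    have "(\<Sum>t\<in>I. A k1 t * B t k2) = (\<Sum>t\<in>I. Nw m t * Nw n (p - t) * v k1 t (p - t) * v k2 t (p - t)) / G k2"
      unfolding A_def B_def by (simp add: sum_divide_distrib mult_ac)
    also have "\<dots> = ip m n (v k1) (v k2) / G k2"
      unfolding I_def ip_homog[OF vhom[OF that(1)]] ..
    also have "\<dots> = (if k1 = k2 then 1 else 0)" using ipv[OF that] Gnz[OF that(2)] by simp
    finally show ?thesis .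
  qed
  have pmn: "p \<le> m + n" using assms unfolding p_def by simp
  have inv: "(\<Sum>k'\<in>K. B t k' * A k' t') = (if t = t' then 1 else 0)" if "t \<in> I" "t' \<in> I" for t t'
    using left_right_inv_set[OF finite_Sset finite_adm card_Sset_adm[OF pmn], of A B t t'] hyp that
    unfolding I_def K_def by blast
  define Cx where "Cx = (\<lambda>k'. if k' \<in> K then B i k' else 0)"
  have iI: "i \<in> I" unfolding I_def Sset_def p_def using assms by auto
  have Kdef': "adm_k m n (i + j) = K" unfolding K_def p_def ..
  have vdef': "(f_act m n ^^ (i + j - k')) (phi_mnk m n k') = v k'" for k'
    unfolding v_def p_def ..
  let ?P = "\<lambda>C :: nat \<Rightarrow> complex. (\<forall>k'. k' \<notin> adm_k m n (i + j) \<longrightarrow> C k' = 0) \<and>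
      (\<forall>a b. basis_vec i j a b =
         (\<Sum>k'\<in>adm_k m n (i + j). C k' * ((f_act m n ^^ (i + j - k')) (phi_mnk m n k')) a b))"
  have PCx: "?P Cx"
    unfolding Kdef' vdef'
  proof (intro conjI allI impI)
    fix k' assume "k' \<notin> K" then show "Cx k' = 0" unfolding Cx_def by simp
  next
    fix a b
    show "basis_vec i j a b = (\<Sum>k'\<in>K. Cx k' * v k' a b)"
    proof (cases "a + b = p")
      case False
      have "(\<Sum>k'\<in>K. Cx k' * v k' a b) = 0"
        using vhom False unfolding homog_def by (intro sum.neutral) auto
      moreover have "basis_vec i j a b = 0" using False unfolding basis_vec_def p_def by auto
      ultimately show ?thesis by simp
    next
      case True
      show ?thesis
      proof (cases "a \<in> I")
        case True': True
        have b: "b = p - a" using True by simp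
        have "(\<Sum>k'\<in>K. Cx k' * v k' a b) = (\<Sum>k'\<in>K. B i k' * A k' a)"
          unfolding Cx_def A_def b by (intro sum.cong refl) simp
        also have "\<dots> = (if i = a then 1 else 0)" by (rule inv[OF iI True'])
        also have "\<dots> = basis_vec i j a b" unfolding basis_vec_def using True p_def by auto
        finally show ?thesis ..
      next
        case False
        hence out: "\<not> (a \<le> m \<and> b \<le> n)" using True unfolding I_def Sset_def by auto
        have "(\<Sum>k'\<in>K. Cx k' * v k' a b) = 0"
          using vbox out unfolding boxed_def by (intro sum.neutral) auto
        moreover have "basis_vec i j a b = 0" using out assms unfolding basis_vec_def by auto
        ultimately show ?thesis by simp
      qed
    qed
  qed
  have uniq: "C = Cx" if PC: "?P C" for C
  proof
    fix k0
    show "C k0 = Cx k0"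
    proof (cases "k0 \<in> K")
      case False then show ?thesis using PC unfolding Kdef' Cx_def by auto
    next
      case True
      have eqv: "basis_vec i j = (\<lambda>a b. \<Sum>k'\<in>K. C k' * v k' a b)"
        using PC unfolding Kdef' vdef' by (intro ext) auto
      have "Nw m i * Nw n j * v k0 i j = ip m n (basis_vec i j) (v k0)"
        using assms by (simp add: ip_basis)
      also have "\<dots> = (\<Sum>k'\<in>K. C k' * ip m n (v k') (v k0))"
        unfolding eqv by (rule ip_sum1[OF finite_adm[of m n p, folded K_def]])
      also have "\<dots> = (\<Sum>k'\<in>K. if k' = k0 then C k0 * G k0 else 0)"
        by (intro sum.cong refl) (use ipv True in auto)
      also have "\<dots> = C k0 * G k0" using True finite_adm[of m n p, folded K_def] by (simp add: sum.delta)
      finally have "C k0 = Nw m i * Nw n j * v k0 i j / G k0"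
        using Gnz[OF True] by (simp add: field_simps)
      thus ?thesis unfolding Cx_def B_def using True p_def by simp
    qed
  qed
  have CGeq: "CG m n k i j = Cx k"
  proof -
    have "(THE C. ?P C) = Cx" by (rule the_equality[of ?P Cx, OF PCx uniq])
    thus ?thesis unfolding CG_def by simp
  qed
  have cc: "coord_c m n k i j = v k i j" unfolding coord_c_def v_def p_def ..
  have CGv: "CG m n k i j = Nw m i * Nw n j * v k i j / G k"
    unfolding CGeq Cx_def B_def using kK p_def by simp
  define M where "M = m + n - 2 * k"
  define q where "q = m + n - k - i - j"
  define T where "T = m + n - k"
  define Bc where "Bc = (of_nat ((m + n - k + 1) choose k) :: complex)"
  have km: "k \<le> m" "k \<le> n" using assms by auto
  have hN1: "Nw m i = fact i * fact i * (fact m / (fact i * fact (m - i)))"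
    unfolding Nw_def of_nat_mult of_nat_fact binomial_fact[OF assms(2)] ..
  have hN2: "Nw n j = fact j * fact j * (fact n / (fact j * fact (n - j)))"
    unfolding Nw_def of_nat_mult of_nat_fact binomial_fact[OF assms(3)] ..
  have e1: "m + n - 2 * k - (p - k) = q" unfolding q_def p_def using assms by simp
  have hG: "G k = (fact (p - k) * fact M / fact q) * (fact m * fact n * Bc / (fact (m - k) * fact (n - k)))"
    unfolding Gval[OF kK] e1 M_def Bc_def of_nat_mult of_nat_fact by simp
  have e2: "m - i + (n - j) + (i + j - k) = T" unfolding T_def using assms by simp
  have hM1: "multinom3 (m - i) (n - j) (i + j - k) = fact T / (fact (m - i) * fact (n - j) * fact (p - k))"
    unfolding multinom3_def e2 p_def ..
  have e3: "i + j + (m + n - k - i - j) = T" unfolding T_def using assms by simp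
  have hM2: "multinom3 i j (m + n - k - i - j) = fact T / (fact i * fact j * fact q)"
    unfolding multinom3_def e3 q_def ..
  have e4: "M - (m - k) = n - k" unfolding M_def using km by simp
  have le: "m - k \<le> M" unfolding M_def using km by simp
  have bM: "(of_nat (M choose (m - k)) :: complex) = fact M / (fact (m - k) * fact (M - (m - k)))"
    by (rule binomial_fact[OF le])
  have hD0: "D_mnk m n k = Bc * of_nat (M choose (m - k))"
    unfolding D_mnk_def Bc_def M_def ..
  have hD: "D_mnk m n k = Bc * (fact M / (fact (m - k) * fact (n - k)))"
    unfolding hD0 bM e4 ..
  have Bnz: "Bc \<noteq> 0" unfolding Bc_def using km by (simp add: binomial_eq_0_iff)
  show ?thesis
    unfolding CGv cc hN1 hN2 hG hM1 hM2 hD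
    by (rule final_alg) (simp_all add: Bnz)
qed

end
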